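(* For all $P,Q\in\Gamma_n$, $$0\le \tfrac12 \Delta(P\|Q)\le M_{SG}(P\|Q)\qquad\text{and}\qquad 0\le \tfrac12\xi_{\Delta}(P\|Q)\le \xi_{SG}(P\|Q).$$
   Context: $\Gamma_n=\{P=(p_1,\dots,p_n): p_i>0,\ \sum_i p_i=1\}$, $n\ge2$. For $f:(0,\infty)\to\mathbb{R}$, $C_f(P\|Q)=\sum_{i=1}^n q_i f(p_i/q_i)$; for differentiable $f$, $E_f(P\|Q)=\sum_{i=1}^n (p_i-q_i) f'(p_i/q_i)$ and $\xi_f=E_f-C_f$. With $f_{SG}(x)=\sqrt{(x^2+1)/2}-\sqrt x$ and $f_\Delta(x)=\frac{(x-1)^2}{x+1}$: $M_{SG}=C_{f_{SG}}=\sum_i\big(\sqrt{(p_i^2+q_i^2)/2}-\sqrt{p_iq_i}\big)$, $\Delta=C_{f_\Delta}=\sum_i\frac{(p_i-q_i)^2}{p_i+q_i}$, $\xi_{SG}=\xi_{f_{SG}}$, $\xi_\Delta=\xi_{f_\Delta}$. *)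

theory Defs
  imports "HOL-Analysis.Analysis"
begin

definition Gamma :: "nat \<Rightarrow> (nat \<Rightarrow> real) set" where
  "Gamma n = {p. (\<forall>i\<in>{1..n}. p i > 0) \<and> (\<Sum>i=1..n. p i) = 1}"

definition C_div :: "(real \<Rightarrow> real) \<Rightarrow> nat \<Rightarrow> (nat \<Rightarrow> real) \<Rightarrow> (nat \<Rightarrow> real) \<Rightarrow> real" where
  "C_div f n p q = (\<Sum>i=1..n. q i * f (p i / q i))"

definition E_div :: "(real \<Rightarrow> real) \<Rightarrow> nat \<Rightarrow> (nat \<Rightarrow> real) \<Rightarrow> (nat \<Rightarrow> real) \<Rightarrow> real" where
  "E_div f n p q = (\<Sum>i=1..n. (p i - q i) * deriv f (p i / q i))"

definition xi_div :: "(real \<Rightarrow> real) \<Rightarrow> nat \<Rightarrow> (nat \<Rightarrow> real) \<Rightarrow> (nat \<Rightarrow> real) \<Rightarrow> real" where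
  "xi_div f n p q = E_div f n p q - C_div f n p q"

definition f_SG :: "real \<Rightarrow> real" where
  "f_SG x = sqrt ((x\<^sup>2 + 1) / 2) - sqrt x"

definition f_Delta :: "real \<Rightarrow> real" where
  "f_Delta x = (x - 1)\<^sup>2 / (x + 1)"

definition M_SG :: "nat \<Rightarrow> (nat \<Rightarrow> real) \<Rightarrow> (nat \<Rightarrow> real) \<Rightarrow> real" where
  "M_SG = C_div f_SG"

definition Delta :: "nat \<Rightarrow> (nat \<Rightarrow> real) \<Rightarrow> (nat \<Rightarrow> real) \<Rightarrow> real" where
  "Delta = C_div f_Delta"

definition xi_SG :: "nat \<Rightarrow> (nat \<Rightarrow> real) \<Rightarrow> (nat \<Rightarrow> real) \<Rightarrow> real" where
  "xi_SG = xi_div f_SG"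

definition xi_Delta :: "nat \<Rightarrow> (nat \<Rightarrow> real) \<Rightarrow> (nat \<Rightarrow> real) \<Rightarrow> real" where
  "xi_Delta = xi_div f_Delta"

end

theory Submission
  imports Defs
begin

lemma sqrt_facts:
  fixes x :: real assumes x: "x > 0"
  defines "t \<equiv> sqrt x" and "s \<equiv> sqrt ((x\<^sup>2 + 1) / 2)"
  shows "t > 0" "s > 0" "t\<^sup>2 = x" "s\<^sup>2 = (x\<^sup>2+1)/2" "s + t \<le> x + 1"
    "4 * t * s \<le> (x+1)\<^sup>2"
proof -
  show t0: "t > 0" using x by (simp add: t_def)
  have xp: "x\<^sup>2 + 1 > 0" using zero_le_power2[of x] by linarith
  show s0: "s > 0" unfolding s_def using xp by simp
  show tt: "t\<^sup>2 = x" using x by (simp add: t_def)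
  show ss: "s\<^sup>2 = (x\<^sup>2+1)/2" unfolding s_def using xp by simp
  have "s\<^sup>2 \<le> (x - t + 1)\<^sup>2"
  proof -
    have "(x - t + 1)\<^sup>2 - s\<^sup>2 = (t - 1)^4 / 2"
      unfolding ss using tt[symmetric] by (simp add: power2_eq_square power4_eq_xxxx algebra_simps)
    moreover have "(t - 1)^4 / 2 \<ge> 0" by (simp add: zero_le_even_power)
    ultimately show ?thesis by linarith
  qed
  moreover have "x - t + 1 > 0"
  proof -
    have "x - t + 1 = (t - 1/2)\<^sup>2 + 3/4" using tt by (simp add: power2_eq_square algebra_simps)
    moreover have "(t - 1/2)\<^sup>2 \<ge> 0" by simp
    ultimately show ?thesis by linarith
  qed
  ultimately have "s \<le> x - t + 1" using power2_le_imp_le[of s "x - t + 1"] by linarith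
  thus "s + t \<le> x + 1" by linarith
  have "(4 * t * s)^2 \<le> ((x+1)^2)^2"
  proof -
    have "(4 * t * s)^2 = 8 * x * (x\<^sup>2+1)" using tt ss by (simp add: power_mult_distrib)
    moreover have "((x+1)^2)^2 - 8 * x * (x\<^sup>2+1) = (x-1)^4"
      by (simp add: power2_eq_square power4_eq_xxxx algebra_simps)
    moreover have "(x-1)^4 \<ge> 0" by (simp add: zero_le_even_power)
    ultimately show ?thesis by linarith
  qed
  thus "4 * t * s \<le> (x+1)\<^sup>2" using power2_le_imp_le[of "4 * t * s" "(x+1)\<^sup>2"] zero_le_power2[of "x+1"] by linarith
qed

lemma deriv_SG:
  fixes x :: real assumes x: "x > 0"
  shows "deriv f_SG x = x / (2 * sqrt ((x\<^sup>2 + 1) / 2)) - 1 / (2 * sqrt x)"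
proof -
  have xp0: "x\<^sup>2 + 1 > 0" using zero_le_power2[of x] by linarith
  hence xp: "(x\<^sup>2 + 1) / 2 > 0" by simp
  have "(f_SG has_real_derivative
      (inverse (sqrt ((x\<^sup>2 + 1) / 2)) / 2 * ((2 * x) / 2) - inverse (sqrt x) / 2)) (at x)"
  proof -
    have d1: "((\<lambda>x. (x\<^sup>2+1)/2) has_real_derivative ((2 * x) / 2)) (at x)"
      by (auto intro!: derivative_eq_intros)
    have d2: "((\<lambda>x. sqrt ((x\<^sup>2+1)/2)) has_real_derivative
         inverse (sqrt ((x\<^sup>2 + 1) / 2)) / 2 * ((2 * x) / 2)) (at x)"
      by (rule DERIV_chain2[OF DERIV_real_sqrt[OF xp] d1])
    have "f_SG = (\<lambda>x. sqrt ((x\<^sup>2+1)/2) - sqrt x)" by (simp add: f_SG_def[abs_def])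
    then show ?thesis using DERIV_diff[OF d2 DERIV_real_sqrt[OF x]] by simp
  qed
  from DERIV_imp_deriv[OF this] show ?thesis by (simp add: field_simps)
qed


lemma deriv_Delta:
  fixes x :: real assumes x: "x > 0"
  shows "deriv f_Delta x = (x - 1) * (x + 3) / (x + 1)\<^sup>2"
proof -
  have d1: "((\<lambda>x. (x - 1)\<^sup>2) has_real_derivative (2 * (x - 1))) (at x)"
    by (auto intro!: derivative_eq_intros)
  have d2: "((\<lambda>x. x + 1) has_real_derivative 1) (at x)"
    by (auto intro!: derivative_eq_intros)
  have ne: "x + 1 \<noteq> 0" using x by simp
  have "f_Delta = (\<lambda>x. (x - 1)\<^sup>2 / (x + 1))" by (simp add: f_Delta_def[abs_def])
  then have "(f_Delta has_real_derivative
     ((2 * (x - 1)) * (x + 1) - (x - 1)\<^sup>2 * 1) / ((x + 1) * (x + 1))) (at x)"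
    using DERIV_divide[OF d1 d2 ne] by simp
  from DERIV_imp_deriv[OF this] show ?thesis by (simp add: power2_eq_square algebra_simps)
qed

lemma pw1:
  fixes x :: real assumes x: "x > 0"
  shows "0 \<le> f_Delta x" "f_Delta x / 2 \<le> f_SG x"
    "f_SG x = (x - 1)\<^sup>2 / (2 * (sqrt ((x\<^sup>2 + 1) / 2) + sqrt x))"
proof -
  define t where "t = sqrt x"
  define s where "s = sqrt ((x\<^sup>2 + 1) / 2)"
  note F = sqrt_facts[OF x, folded t_def s_def]
  show "0 \<le> f_Delta x" unfolding f_Delta_def using x by simp
  have "(s - t) * (s + t) = (x - 1)\<^sup>2 / 2"
    using F(3,4) by (simp add: power2_eq_square algebra_simps)
  hence e: "s - t = (x - 1)\<^sup>2 / (2 * (s + t))" using F(1,2)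
    by (simp add: field_simps)
  thus "f_SG x = (x - 1)\<^sup>2 / (2 * (sqrt ((x\<^sup>2 + 1) / 2) + sqrt x))"
    by (simp add: f_SG_def s_def t_def)
  have "(x - 1)\<^sup>2 / (2 * (x + 1)) \<le> (x - 1)\<^sup>2 / (2 * (s + t))"
    by (rule divide_left_mono) (use F(1,2,5) in auto)
  moreover have "f_Delta x / 2 = (x - 1)\<^sup>2 / (2 * (x + 1))" by (simp add: f_Delta_def)
  moreover have "f_SG x = s - t" by (simp add: f_SG_def s_def t_def)
  ultimately show "f_Delta x / 2 \<le> f_SG x" using e by linarith
qed

lemma pw2:
  fixes x :: real assumes x: "x > 0"
  shows "0 \<le> (x - 1) * deriv f_Delta x - f_Delta x"
    "((x - 1) * deriv f_Delta x - f_Delta x) / 2 \<le> (x - 1) * deriv f_SG x - f_SG x"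
proof -
  define t where "t = sqrt x"
  define s where "s = sqrt ((x\<^sup>2 + 1) / 2)"
  note F = sqrt_facts[OF x, folded t_def s_def]
  have gd: "(x - 1) * deriv f_Delta x - f_Delta x = 2 * (x - 1)\<^sup>2 / (x + 1)\<^sup>2"
  proof -
    have p: "x + 1 > 0" using x by simp
    have "(x - 1) * deriv f_Delta x - f_Delta x
        = (x - 1) * ((x - 1) * (x + 3) / (x + 1)\<^sup>2) - (x - 1)\<^sup>2 / (x + 1)"
      using x by (simp add: deriv_Delta f_Delta_def)
    also have "\<dots> = 2 * (x - 1)\<^sup>2 / (x + 1)\<^sup>2"
    proof -
      have a: "(x - 1)\<^sup>2 / (x + 1) = ((x - 1)\<^sup>2 * (x + 1)) / (x + 1)\<^sup>2"
        using p by (simp add: power2_eq_square)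
      have b: "(x - 1) * ((x - 1) * (x + 3)) - (x - 1)\<^sup>2 * (x + 1) = 2 * (x - 1)\<^sup>2"
        by (simp add: power2_eq_square algebra_simps)
      show ?thesis unfolding a times_divide_eq_right diff_divide_distrib[symmetric] b ..
    qed
    finally show ?thesis .
  qed
  show "0 \<le> (x - 1) * deriv f_Delta x - f_Delta x" unfolding gd by simp
  have fs: "f_SG x = s - t" by (simp add: f_SG_def s_def t_def)
  have e: "s - t = (x - 1)\<^sup>2 / (2 * (s + t))" using pw1(3)[OF x] fs by (simp add: s_def t_def)
  have gs0: "(x - 1) * deriv f_SG x - f_SG x = (x - 1) * (x / (2 * s) - 1 / (2 * t)) - (s - t)"
    using deriv_SG[OF x] fs by (simp add: s_def t_def)
  have "((x - 1) * (x / (2 * s) - 1 / (2 * t)) - (s - t)) * (2 * t * s) = (x + 1) * (s - t)"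
  proof -
    have "((x - 1) * (x / (2 * s) - 1 / (2 * t)) - (s - t)) * (2 * t * s)
        = (x - 1) * (x * t - s) - 2 * t * s * (s - t)" using F(1,2) by (simp add: field_simps)
    also have "\<dots> = (x + 1) * (s - t)"
    proof -
      have A: "2 * (s * s) - (x * x + 1) = 0" using F(4) by (simp add: power2_eq_square)
      have B: "t * t - x = 0" using F(3) by (simp add: power2_eq_square)
      have C: "(x - 1) * (x * t - s) - 2 * t * s * (s - t) - (x + 1) * (s - t)
          = - t * (2 * (s * s) - (x * x + 1)) + 2 * s * (t * t - x)"
        by (simp add: algebra_simps)
      from C[unfolded A B] show ?thesis by simp
    qed
    finally show ?thesis .
  qed
  hence H: "(x - 1) * (x / (2 * s) - 1 / (2 * t)) - (s - t) = (x + 1) * (s - t) / (2 * t * s)"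
    using F(1,2) by (simp add: eq_divide_eq)
  have stp: "s + t > 0" "t * s > 0" using F(1,2) by auto
  have "(x + 1) * (s - t) / (2 * t * s) = (x + 1) * ((x - 1)\<^sup>2 / (2 * (s + t))) / (2 * t * s)"
    using e by simp
  also have "\<dots> = (x + 1) * (x - 1)\<^sup>2 / (4 * t * s * (s + t))"
    using stp by (simp add: field_simps)
  finally have gs: "(x - 1) * deriv f_SG x - f_SG x = (x + 1) * (x - 1)\<^sup>2 / (4 * t * s * (s + t))"
    using gs0 H by simp
  have le: "4 * t * s * (s + t) \<le> (x + 1)\<^sup>2 * (x + 1)"
    by (rule mult_mono) (use F(1,2,5,6) in auto)
  have "((x - 1) * deriv f_Delta x - f_Delta x) / 2 = (x + 1) * (x - 1)\<^sup>2 / ((x + 1)\<^sup>2 * (x + 1))"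
  proof -
    have c: "x + 1 \<noteq> 0" using x by simp
    have "(x + 1) * (x - 1)\<^sup>2 / ((x + 1)\<^sup>2 * (x + 1)) = ((x - 1)\<^sup>2 * (x + 1)) / ((x + 1)\<^sup>2 * (x + 1))"
      by (simp only: mult.commute)
    also have "\<dots> = (x - 1)\<^sup>2 / (x + 1)\<^sup>2"
      by (rule nonzero_mult_divide_mult_cancel_right[OF c])
    finally show ?thesis unfolding gd by simp
  qed
  also have "\<dots> \<le> (x + 1) * (x - 1)\<^sup>2 / (4 * t * s * (s + t))"
    by (rule divide_left_mono[OF le]) (use x F(1,2) in auto)
  finally show "((x - 1) * deriv f_Delta x - f_Delta x) / 2 \<le> (x - 1) * deriv f_SG x - f_SG x"
    using gs by simp
qed


lemma xi_eq:
  assumes "\<forall>i\<in>{1..n}. q i > (0::real)"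
  shows "xi_div f n p q = (\<Sum>i=1..n. q i * ((p i / q i - 1) * deriv f (p i / q i) - f (p i / q i)))"
proof -
  have "xi_div f n p q = (\<Sum>i=1..n. (p i - q i) * deriv f (p i / q i) - q i * f (p i / q i))"
    unfolding xi_div_def E_div_def C_div_def by (simp add: sum_subtractf)
  also have "\<dots> = (\<Sum>i=1..n. q i * ((p i / q i - 1) * deriv f (p i / q i) - f (p i / q i)))"
  proof (rule sum.cong[OF refl])
    fix i assume "i \<in> {1..n}"
    with assms have "q i > 0" by blast
    hence eq: "p i - q i = q i * (p i / q i - 1)" by (simp add: field_simps)
    show "(p i - q i) * deriv f (p i / q i) - q i * f (p i / q i)
        = q i * ((p i / q i - 1) * deriv f (p i / q i) - f (p i / q i))"
      unfolding eq by (metis (no_types) mult.assoc right_diff_distrib)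
  qed
  finally show ?thesis .
qed

theorem proposition5p3:
  fixes n :: nat and p q :: "nat \<Rightarrow> real"
  assumes "n \<ge> 2" and "p \<in> Gamma n" and "q \<in> Gamma n"
  shows "0 \<le> Delta n p q / 2 \<and> Delta n p q / 2 \<le> M_SG n p q
    \<and> 0 \<le> xi_Delta n p q / 2 \<and> xi_Delta n p q / 2 \<le> xi_SG n p q"
proof -
  have qp: "\<forall>i\<in>{1..n}. q i > 0" and pp: "\<forall>i\<in>{1..n}. p i > 0"
    using assms(2,3) by (auto simp: Gamma_def)
  have xp: "p i / q i > 0" if "i \<in> {1..n}" for i using qp pp that by simp
  have D2: "Delta n p q / 2 = (\<Sum>i=1..n. q i * (f_Delta (p i / q i) / 2))"
    unfolding Delta_def C_div_def sum_divide_distrib by simp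
  have X2: "xi_Delta n p q / 2 = (\<Sum>i=1..n. q i *
      (((p i / q i - 1) * deriv f_Delta (p i / q i) - f_Delta (p i / q i)) / 2))"
    unfolding xi_Delta_def xi_eq[OF qp] sum_divide_distrib by simp
  have 1: "0 \<le> Delta n p q / 2" unfolding D2
    by (rule sum_nonneg) (use qp xp pw1(1,2) in \<open>simp add: less_imp_le\<close>)
  have 2: "Delta n p q / 2 \<le> M_SG n p q" unfolding D2 M_SG_def C_div_def
    by (rule sum_mono) (use qp xp pw1(1,2) in \<open>simp add: less_imp_le\<close>)
  have 3: "0 \<le> xi_Delta n p q / 2" unfolding X2
    by (rule sum_nonneg) (use qp xp pw2 in \<open>simp add: less_imp_le\<close>)
  have 4: "xi_Delta n p q / 2 \<le> xi_SG n p q" unfolding X2 xi_SG_def xi_eq[OF qp]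
    by (rule sum_mono) (use qp xp pw2 in \<open>simp add: less_imp_le\<close>)
  show ?thesis using 1 2 3 4 by blast
qed

end
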